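(* There exists a directed set $\mathcal A$, which is not a cardinal number, with $\operatorname{card}(\mathcal A)=\operatorname{cov}(\mathcal N)$, such that $\mathcal{ANM}_{\mathcal A}\setminus\mathcal{ND}_{\mathcal A}$ is strongly $\mathfrak c$-algebrable in $\left(\mathbb R^{[0,1]}\right)^{\mathcal A}$.
   Context: A directed set is a nonempty set $\mathcal A$ with a reflexive transitive relation $\le$ in which any two elements have an upper bound; $x_A\to x$ if for each neighbourhood $U$ of $x$ there is $A_0$ with $x_A\in U$ for $A\ge A_0$. $\left(\mathbb R^{[0,1]}\right)^{\mathcal A}$ is the commutative real algebra of nets of functions $[0,1]\to\mathbb R$ with indexwise addition, indexwise pointwise multiplication and scalar multiplication. $\lambda$ is Lebesgue measure, $\mathcal N$ the null subsets of $[0,1]$, $\operatorname{cov}(\mathcal N)$ the least size of a subfamily of $\mathcal N$ covering $[0,1]$. $\mathcal{ANM}_{\mathcal A}$: nets of Lebesgue measurable $f_A:[0,1]\to\mathbb R$ converging a.e. to a measurable $f$ but not converging in measure to $f$. $\mathcal{ND}_{\mathcal A}$: nets of Lebesgue measurable $f_A:[0,1]\to\mathbb R$ with some integrable $g$ satisfying $|f_A|\le g$ a.e. for all $A$, $f_A\to f$ a.e. for some integrable $f$, and $\int|f_A-f|\,d\lambda\not\to0$. A subset $S$ of a commutative algebra is strongly $\kappa$-algebrable if there is a set $X$ of $\kappa$ algebraically independent elements (no nonzero polynomial without constant term vanishes at distinct elements of $X$) such that every nonzero element of the algebra generated by $X$ (values of polynomials without constant term at elements of $X$) belongs to $S$.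 *)

theory Defs
  imports "HOL-Analysis.Analysis" "HOL-Library.Equipollence"
begin

definition directed_set :: "'i set \<Rightarrow> ('i \<Rightarrow> 'i \<Rightarrow> bool) \<Rightarrow> bool" where
  "directed_set A le \<longleftrightarrow> A \<noteq> {} \<and> (\<forall>a\<in>A. le a a)
     \<and> (\<forall>a\<in>A. \<forall>b\<in>A. \<forall>c\<in>A. le a b \<longrightarrow> le b c \<longrightarrow> le a c)
     \<and> (\<forall>a\<in>A. \<forall>b\<in>A. \<exists>c\<in>A. le a c \<and> le b c)"

definition dir_rel :: "'i set \<Rightarrow> ('i \<Rightarrow> 'i \<Rightarrow> bool) \<Rightarrow> ('i \<times> 'i) set" where
  "dir_rel A le = {(a, b). a \<in> A \<and> b \<in> A \<and> le a b}"

definition net_tendsto :: "'i set \<Rightarrow> ('i \<Rightarrow> 'i \<Rightarrow> bool) \<Rightarrow> ('i \<Rightarrow> 'b::topological_space) \<Rightarrow> 'b \<Rightarrow> bool" where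
  "net_tendsto A le y l \<longleftrightarrow>
     (\<forall>U. open U \<and> l \<in> U \<longrightarrow> (\<exists>a0\<in>A. \<forall>a\<in>A. le a0 a \<longrightarrow> y a \<in> U))"

abbreviation lam01 :: "real measure" where
  "lam01 \<equiv> lebesgue_on {0..1}"

text \<open>cov(N): card A = cov(N) iff A is equipollent to a minimal-size family of
Lebesgue null subsets of [0,1] covering [0,1].\<close>
definition null_cover :: "real set set \<Rightarrow> bool" where
  "null_cover \<F> \<longleftrightarrow> (\<forall>N\<in>\<F>. N \<subseteq> {0..1} \<and> N \<in> null_sets lebesgue) \<and> {0..1} \<subseteq> \<Union>\<F>"

definition card_eq_covN :: "'i set \<Rightarrow> bool" where
  "card_eq_covN A \<longleftrightarrow> (\<exists>\<F>. null_cover \<F> \<and> A \<approx> \<F> \<and> (\<forall>\<G>. null_cover \<G> \<longrightarrow> \<F> \<lesssim> \<G>))"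

text \<open>Nets of functions [0,1] -> R indexed by A, represented extensionally
(value 0 outside A x [0,1]).\<close>
definition net_alg :: "'i set \<Rightarrow> ('i \<Rightarrow> real \<Rightarrow> real) set" where
  "net_alg A = {F. \<forall>a x. (a \<notin> A \<or> x \<notin> {0..1}) \<longrightarrow> F a x = 0}"

definition ae_net_tendsto :: "'i set \<Rightarrow> ('i \<Rightarrow> 'i \<Rightarrow> bool) \<Rightarrow> ('i \<Rightarrow> real \<Rightarrow> real) \<Rightarrow> (real \<Rightarrow> real) \<Rightarrow> bool" where
  "ae_net_tendsto A le F f \<longleftrightarrow> (AE x in lam01. net_tendsto A le (\<lambda>a. F a x) (f x))"

definition net_tendsto_in_measure :: "'i set \<Rightarrow> ('i \<Rightarrow> 'i \<Rightarrow> bool) \<Rightarrow> ('i \<Rightarrow> real \<Rightarrow> real) \<Rightarrow> (real \<Rightarrow> real) \<Rightarrow> bool" where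
  "net_tendsto_in_measure A le F f \<longleftrightarrow>
     (\<forall>\<epsilon>>0. net_tendsto A le (\<lambda>a. measure lam01 {x\<in>{0..1}. \<epsilon> \<le> \<bar>F a x - f x\<bar>}) 0)"

definition ANM :: "'i set \<Rightarrow> ('i \<Rightarrow> 'i \<Rightarrow> bool) \<Rightarrow> ('i \<Rightarrow> real \<Rightarrow> real) set" where
  "ANM A le = {F. (\<forall>a\<in>A. F a \<in> borel_measurable lam01) \<and>
     (\<exists>f \<in> borel_measurable lam01. ae_net_tendsto A le F f \<and> \<not> net_tendsto_in_measure A le F f)}"

definition ND :: "'i set \<Rightarrow> ('i \<Rightarrow> 'i \<Rightarrow> bool) \<Rightarrow> ('i \<Rightarrow> real \<Rightarrow> real) set" where
  "ND A le = {F. (\<forall>a\<in>A. F a \<in> borel_measurable lam01) \<and>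
     (\<exists>g. integrable lam01 g \<and> (\<forall>a\<in>A. AE x in lam01. \<bar>F a x\<bar> \<le> g x)) \<and>
     (\<exists>f. integrable lam01 f \<and> ae_net_tendsto A le F f \<and>
          \<not> net_tendsto A le (\<lambda>a. LINT x|lam01. \<bar>F a x - f x\<bar>) 0)}"

text \<open>Real polynomials in the variables 0..n-1 without constant term, given by
finitely supported coefficient functions on exponent vectors.\<close>
definition nc_poly :: "nat \<Rightarrow> ((nat \<Rightarrow> nat) \<Rightarrow> real) \<Rightarrow> bool" where
  "nc_poly n c \<longleftrightarrow> finite {\<alpha>. c \<alpha> \<noteq> 0} \<and>
     (\<forall>\<alpha>. c \<alpha> \<noteq> 0 \<longrightarrow> \<alpha> \<noteq> (\<lambda>_. 0) \<and> (\<forall>i\<ge>n. \<alpha> i = 0))"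

definition poly_eval :: "((nat \<Rightarrow> nat) \<Rightarrow> real) \<Rightarrow> nat \<Rightarrow> (nat \<Rightarrow> real) \<Rightarrow> real" where
  "poly_eval c n v = (\<Sum>\<alpha> | c \<alpha> \<noteq> 0. c \<alpha> * (\<Prod>i<n. v i ^ \<alpha> i))"

definition poly_net :: "((nat \<Rightarrow> nat) \<Rightarrow> real) \<Rightarrow> nat \<Rightarrow> (nat \<Rightarrow> 'i \<Rightarrow> real \<Rightarrow> real) \<Rightarrow> 'i \<Rightarrow> real \<Rightarrow> real" where
  "poly_net c n G = (\<lambda>a x. poly_eval c n (\<lambda>i. G i a x))"

text \<open>Strong kappa-algebrability (kappa = cardinality of K) of S inside the algebra Alg
of nets of functions with indexwise pointwise operations.\<close>
definition strongly_algebrable ::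
  "('i \<Rightarrow> real \<Rightarrow> real) set \<Rightarrow> ('i \<Rightarrow> real \<Rightarrow> real) set \<Rightarrow> 'k set \<Rightarrow> bool" where
  "strongly_algebrable Alg S K \<longleftrightarrow> (\<exists>X \<subseteq> Alg. X \<approx> K \<and>
     (\<forall>n G c. inj_on G {..<n} \<and> G ` {..<n} \<subseteq> X \<and> nc_poly n c \<and> c \<noteq> (\<lambda>_. 0)
        \<longrightarrow> poly_net c n G \<noteq> (\<lambda>a x. 0)) \<and>
     (\<forall>n G c. G ` {..<n} \<subseteq> X \<and> nc_poly n c \<and> poly_net c n G \<noteq> (\<lambda>a x. 0)
        \<longrightarrow> poly_net c n G \<in> S))"

end

theory Submission
  imports Defs "HOL-Algebra.Free_Abelian_Groups" "HOL-Real_Asymp.Real_Asymp"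
begin


lemma min_cover: "\<exists>F0. null_cover F0 \<and> (\<forall>G. null_cover G \<longrightarrow> F0 \<lesssim> G)"
proof -
  let ?R = "{|F| |F. null_cover F}"
  have nc: "null_cover ((\<lambda>x. {x}) ` {0..1::real})"
    unfolding null_cover_def by auto
  hence "?R \<noteq> {}" by blast
  moreover have "\<forall>r\<in>?R. Card_order r" using card_of_Card_order by blast
  ultimately obtain r where "r \<in> ?R" "\<forall>r'\<in>?R. r \<le>o r'"
    using exists_minim_Card_order[of ?R] by blast
  then obtain F0 where F0: "null_cover F0" "\<forall>G. null_cover G \<longrightarrow> |F0| \<le>o |G|" by blast
  show ?thesis using F0 by (metis card_of_ordLeq lepoll_def)
qed

lemma null_cover_infinite: assumes "null_cover F" shows "infinite F"
proof
  assume "finite F"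
  hence u: "\<Union>F \<in> null_sets lebesgue" using assms unfolding null_cover_def
    by (intro null_sets.finite_Union) auto
  have sub: "{0..1::real} \<subseteq> \<Union>F" using assms unfolding null_cover_def by blast
  have ms: "{0..1::real} \<in> sets lebesgue" by simp
  have "{0..1::real} \<in> null_sets lebesgue"
    by (rule null_sets_subset[OF u ms sub])
  thus False by (simp add: null_sets_def)
qed




lemma dir_part: "\<exists>(A::real set) (N::real \<Rightarrow> real set) (le::real \<Rightarrow> real \<Rightarrow> bool). directed_set A le \<and> \<not> Card_order (dir_rel A le) \<and> card_eq_covN A
  \<and> (\<forall>a\<in>A. N a \<in> null_sets lebesgue)
  \<and> (\<forall>x\<in>{0..1}. \<exists>a0\<in>A. \<forall>a\<in>A. le a0 a \<longrightarrow> x \<in> N a)"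
proof -
  obtain F0 where F0: "null_cover F0" "\<And>G. null_cover G \<Longrightarrow> F0 \<lesssim> G" using min_cover by blast
  have inf: "infinite F0" using F0(1) null_cover_infinite by blast
  define B where "B = Fpow F0"
  have BF: "B \<approx> F0" unfolding B_def using eqpoll_Fpow[OF inf] .
  have nc: "null_cover ((\<lambda>x. {x}) ` {0..1::real})"
    unfolding null_cover_def by auto
  have "(\<lambda>x. {x}) ` {0..1::real} \<lesssim> (UNIV::real set)"
    unfolding lepoll_def by (rule exI[of _ the_elem]) (auto simp: inj_on_def)
  hence "B \<lesssim> (UNIV::real set)" using F0(2)[OF nc] BF
    by (meson lepoll_trans lepoll_trans1)
  then obtain g :: "real set set \<Rightarrow> real" where g: "inj_on g B" unfolding lepoll_def by blast
  define A where "A = g ` B"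
  define le where "le = (\<lambda>a b. inv_into B g a \<subseteq> inv_into B g b)"
  define N where "N = (\<lambda>a. \<Union>(inv_into B g a))"
  have ginv: "\<And>S. S \<in> B \<Longrightarrow> inv_into B g (g S) = S" using g by simp
  have "B \<approx> A" unfolding A_def eqpoll_def using g inj_on_imp_bij_betw by blast
  hence AB: "A \<approx> B" by (rule eqpoll_sym)
  have dir: "directed_set A le"
    unfolding directed_set_def
  proof (intro conjI ballI impI)
    show "A \<noteq> {}" unfolding A_def B_def Fpow_def by blast
    fix a b assume "a \<in> A" "b \<in> A"
    then obtain S T where ST: "S \<in> B" "T \<in> B" "a = g S" "b = g T" unfolding A_def by blast
    hence "S \<union> T \<in> B" unfolding B_def Fpow_def by auto
    thus "\<exists>c\<in>A. le a c \<and> le b c" unfolding le_def A_def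
      by (intro bexI[of _ "g (S \<union> T)"]) (auto simp: ginv ST)
  qed (auto simp: le_def)
  have notcard: "\<not> Card_order (dir_rel A le)"
  proof
    assume co: "Card_order (dir_rel A le)"
    obtain N1 N2 where N12: "N1 \<in> F0" "N2 \<in> F0" "N1 \<noteq> N2" using inf
      by (metis finite.intros(1) finite_insert infinite_imp_nonempty insertCI subsetI finite_subset)
    have in1: "{N1} \<in> B" "{N2} \<in> B" using N12 unfolding B_def Fpow_def by auto
    have "g {N1} \<in> Field (dir_rel A le)" "g {N2} \<in> Field (dir_rel A le)"
      using in1 unfolding Field_def dir_rel_def A_def le_def by auto
    moreover have "g {N1} \<noteq> g {N2}" using g in1 N12 by (metis inj_onD singleton_inject)
    moreover have "total_on (Field (dir_rel A le)) (dir_rel A le)"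
      using co unfolding card_order_on_def well_order_on_def linear_order_on_def by blast
    ultimately have "(g {N1}, g {N2}) \<in> dir_rel A le \<or> (g {N2}, g {N1}) \<in> dir_rel A le"
      unfolding total_on_def by blast
    thus False using N12 in1 unfolding dir_rel_def le_def by (auto simp: ginv)
  qed
  have cov: "card_eq_covN A" unfolding card_eq_covN_def
    using F0 AB BF eqpoll_trans by blast
  have nul: "\<forall>a\<in>A. N a \<in> null_sets lebesgue"
  proof
    fix a assume "a \<in> A"
    then obtain S where "S \<in> B" "a = g S" unfolding A_def by blast
    hence "N a = \<Union>S" "finite S" "S \<subseteq> F0" unfolding N_def using ginv by (auto simp: B_def Fpow_def)
    thus "N a \<in> null_sets lebesgue" using F0(1) unfolding null_cover_def
      by (metis null_sets.finite_Union subset_iff)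
  qed
  have conv: "\<forall>x\<in>{0..1}. \<exists>a0\<in>A. \<forall>a\<in>A. le a0 a \<longrightarrow> x \<in> N a"
  proof
    fix x :: real assume "x \<in> {0..1}"
    then obtain M where M: "M \<in> F0" "x \<in> M" using F0(1) unfolding null_cover_def by blast
    hence "{M} \<in> B" unfolding B_def Fpow_def by auto
    thus "\<exists>a0\<in>A. \<forall>a\<in>A. le a0 a \<longrightarrow> x \<in> N a"
      using M unfolding A_def le_def N_def by (intro bexI[of _ "g {M}"]) (auto simp: ginv)
  qed
  show ?thesis by (intro exI[of _ A] exI[of _ N] exI[of _ le] conjI dir notcard cov nul conv)
qed




lemma powr_to_0: assumes "(e::real) > 0" shows "((\<lambda>x::real. x powr e) \<longlongrightarrow> 0) (at_right 0)"
  using assms by real_asymp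

lemma powr_to_inf: assumes "(e::real) > 0" shows "filterlim (\<lambda>x::real. x powr (-e)) at_top (at_right 0)"
  using assms by real_asymp

lemma lemD:
  fixes V :: "real set" and d :: "real \<Rightarrow> real"
  assumes fin: "finite V" and pos: "\<forall>v\<in>V. v > 0" and ex: "\<exists>v\<in>V. d v \<noteq> 0"
  shows "filterlim (\<lambda>x. \<Sum>v\<in>V. d v * x powr -v) at_top (at_right 0) \<or>
         filterlim (\<lambda>x. -(\<Sum>v\<in>V. d v * x powr -v)) at_top (at_right 0)"
proof -
  define W where "W = {v\<in>V. d v \<noteq> 0}"
  have finW: "finite W" "W \<noteq> {}" using fin ex unfolding W_def by auto
  define w where "w = Max W"
  have wW: "w \<in> W" using finW unfolding w_def by simp
  have wpos: "w > 0" and dw: "d w \<noteq> 0" and wV: "w \<in> V" using wW pos unfolding W_def by auto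
  have ev0: "eventually (\<lambda>x::real. x > 0) (at_right 0)" by (simp add: eventually_at_right_less)
  have lim: "((\<lambda>x. \<Sum>v\<in>V. d v * x powr (w - v)) \<longlongrightarrow> (\<Sum>v\<in>V. if v = w then d w else 0)) (at_right 0)"
  proof (rule tendsto_sum)
    fix v assume vV: "v \<in> V"
    show "((\<lambda>x. d v * x powr (w - v)) \<longlongrightarrow> (if v = w then d w else 0)) (at_right 0)"
    proof (cases "v = w")
      case True
      have "eventually (\<lambda>x. d v * x powr (w - v) = d w) (at_right 0)"
        using ev0 by eventually_elim (simp add: True)
      then have "((\<lambda>x. d v * x powr (w - v)) \<longlongrightarrow> d w) (at_right 0)" by (rule tendsto_eventually)
      then show ?thesis using True by simp
    next
      case False
      show ?thesis
      proof (cases "d v = 0")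
        case True then show ?thesis using False by simp
      next
        case dv: False
        hence "v \<in> W" using vV unfolding W_def by auto
        hence "v \<le> w" unfolding w_def using finW by simp
        hence "w - v > 0" using False by simp
        from tendsto_mult_left[OF powr_to_0[OF this], of "d v"] show ?thesis using False by simp
      qed
    qed
  qed
  have sumw: "(\<Sum>v\<in>V. if v = w then d w else 0) = d w" using fin wV by simp
  have eq: "eventually (\<lambda>x. (\<Sum>v\<in>V. d v * x powr -v) = (\<Sum>v\<in>V. d v * x powr (w - v)) * x powr (-w)) (at_right 0)"
    using ev0
  proof eventually_elim
    case (elim x)
    have "(\<Sum>v\<in>V. d v * x powr (w - v)) * x powr (-w) = (\<Sum>v\<in>V. d v * (x powr (w - v) * x powr (-w)))"
      by (simp add: sum_distrib_right mult.assoc)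
    also have "\<dots> = (\<Sum>v\<in>V. d v * x powr -v)"
      using elim by (simp add: powr_add[symmetric])
    finally show ?case by simp
  qed
  show ?thesis
  proof (cases "d w > 0")
    case True
    have "filterlim (\<lambda>x. (\<Sum>v\<in>V. d v * x powr (w - v)) * x powr (-w)) at_top (at_right 0)"
      by (rule filterlim_tendsto_pos_mult_at_top[OF lim[unfolded sumw] True powr_to_inf[OF wpos]])
    moreover have "filterlim (\<lambda>x. \<Sum>v\<in>V. d v * x powr -v) at_top (at_right 0) = filterlim (\<lambda>x. (\<Sum>v\<in>V. d v * x powr (w - v)) * x powr (-w)) at_top (at_right 0)"
      by (rule filterlim_cong[OF refl refl eq])
    ultimately show ?thesis by blast
  next
    case False
    hence "- d w > 0" using dw by simp
    have "filterlim (\<lambda>x. (-(\<Sum>v\<in>V. d v * x powr (w - v))) * x powr (-w)) at_top (at_right 0)"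
      by (rule filterlim_tendsto_pos_mult_at_top[OF tendsto_minus[OF lim[unfolded sumw]] \<open>- d w > 0\<close> powr_to_inf[OF wpos]])
    moreover have "eventually (\<lambda>x. -(\<Sum>v\<in>V. d v * x powr -v) = (-(\<Sum>v\<in>V. d v * x powr (w - v))) * x powr (-w)) (at_right 0)"
      using eq by eventually_elim simp
    hence "filterlim (\<lambda>x. -(\<Sum>v\<in>V. d v * x powr -v)) at_top (at_right 0) = filterlim (\<lambda>x. (-(\<Sum>v\<in>V. d v * x powr (w - v))) * x powr (-w)) at_top (at_right 0)"
      by (rule filterlim_cong[OF refl refl])
    ultimately show ?thesis by blast
  qed
qed




definition Hf :: "(nat \<Rightarrow> real) \<Rightarrow> ((nat\<Rightarrow>nat)\<Rightarrow>real) \<Rightarrow> nat \<Rightarrow> real \<Rightarrow> real" where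
  "Hf s c n x = poly_eval c n (\<lambda>i. exp (x powr (- s i)))"
definition mm :: "(nat\<Rightarrow>real) \<Rightarrow> nat \<Rightarrow> (nat\<Rightarrow>nat) \<Rightarrow> real \<Rightarrow> nat" where
  "mm s n \<alpha> = (\<lambda>v. \<Sum>i\<in>{i. i<n \<and> s i = v}. \<alpha> i)"
definition EE :: "(nat\<Rightarrow>real) \<Rightarrow> nat \<Rightarrow> (real\<Rightarrow>nat) \<Rightarrow> real \<Rightarrow> real" where
  "EE s n \<mu> x = (\<Sum>v\<in>s ` {..<n}. real (\<mu> v) * x powr (- v))"
definition CC :: "(nat\<Rightarrow>real) \<Rightarrow> nat \<Rightarrow> ((nat\<Rightarrow>nat)\<Rightarrow>real) \<Rightarrow> (real\<Rightarrow>nat) \<Rightarrow> real" where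
  "CC s n c \<mu> = (\<Sum>\<alpha>\<in>{\<alpha>. c \<alpha> \<noteq> 0 \<and> mm s n \<alpha> = \<mu>}. c \<alpha>)"

lemma fact1: "(\<Prod>i<n. exp (x powr (- s i)) ^ \<alpha> i) = exp (EE s n (mm s n \<alpha>) x)"
proof -
  have "(\<Prod>i<n. exp (x powr (- s i)) ^ \<alpha> i) = exp (\<Sum>i<n. real (\<alpha> i) * x powr (- s i))"
    by (simp add: exp_sum exp_of_nat_mult)
  also have "(\<Sum>i<n. real (\<alpha> i) * x powr (- s i)) =
      (\<Sum>v\<in>s ` {..<n}. \<Sum>i\<in>{i\<in>{..<n}. s i = v}. real (\<alpha> i) * x powr (- s i))"
    by (rule sum.image_gen) simp
  also have "\<dots> = EE s n (mm s n \<alpha>) x"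
    unfolding EE_def mm_def
  proof (rule sum.cong[OF refl])
    fix v assume "v \<in> s ` {..<n}"
    have "(\<Sum>i\<in>{i\<in>{..<n}. s i = v}. real (\<alpha> i) * x powr (- s i)) = (\<Sum>i\<in>{i. i<n \<and> s i = v}. real (\<alpha> i) * x powr (- v))"
      by (rule sum.cong) auto
    also have "\<dots> = real (\<Sum>i\<in>{i. i<n \<and> s i = v}. \<alpha> i) * x powr (- v)"
      by (simp add: sum_distrib_right)
    finally show "(\<Sum>i\<in>{i\<in>{..<n}. s i = v}. real (\<alpha> i) * x powr (- s i)) = real (\<Sum>i\<in>{i. i<n \<and> s i = v}. \<alpha> i) * x powr (- v)" .
  qed
  finally show ?thesis .
qed

lemma fact2:
  assumes "finite {\<alpha>. c \<alpha> \<noteq> 0}"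
  shows "Hf s c n x = (\<Sum>\<mu>\<in>mm s n ` {\<alpha>. c \<alpha> \<noteq> 0}. CC s n c \<mu> * exp (EE s n \<mu> x))"
proof -
  have "Hf s c n x = (\<Sum>\<alpha>\<in>{\<alpha>. c \<alpha> \<noteq> 0}. c \<alpha> * exp (EE s n (mm s n \<alpha>) x))"
    unfolding Hf_def poly_eval_def by (simp add: fact1)
  also have "\<dots> = (\<Sum>\<mu>\<in>mm s n ` {\<alpha>. c \<alpha> \<noteq> 0}. \<Sum>\<alpha>\<in>{\<alpha>\<in>{\<alpha>. c \<alpha> \<noteq> 0}. mm s n \<alpha> = \<mu>}. c \<alpha> * exp (EE s n (mm s n \<alpha>) x))"
    by (rule sum.image_gen[OF assms])
  also have "\<dots> = (\<Sum>\<mu>\<in>mm s n ` {\<alpha>. c \<alpha> \<noteq> 0}. CC s n c \<mu> * exp (EE s n \<mu> x))"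
    unfolding CC_def
    by (rule sum.cong[OF refl]) (auto simp: sum_distrib_right intro!: sum.cong)
  finally show ?thesis .
qed




lemma mm_out: "v \<notin> s ` {..<n} \<Longrightarrow> mm s n \<alpha> v = 0"
  unfolding mm_def by (rule sum.neutral) auto

lemma growth:
  assumes nc: "nc_poly n c" and s1: "\<forall>i<n. 1 \<le> s i"
    and nz: "\<exists>\<mu>\<in>mm s n ` {\<alpha>. c \<alpha> \<noteq> 0}. CC s n c \<mu> \<noteq> 0"
  shows "\<exists>\<delta>>0. \<exists>K>0. \<forall>x. 0 < x \<and> x < \<delta> \<longrightarrow> K * exp (1/x) \<le> \<bar>Hf s c n x\<bar>"
proof -
  define Sp where "Sp = {\<alpha>. c \<alpha> \<noteq> 0}"
  have finSp: "finite Sp" using nc unfolding nc_poly_def Sp_def by simp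
  define M where "M = {\<mu>\<in>mm s n ` Sp. CC s n c \<mu> \<noteq> 0}"
  have finM: "finite M" "M \<noteq> {}" using finSp nz unfolding M_def Sp_def by auto
  define V where "V = s ` {..<n}"
  have finV: "finite V" and Vpos: "\<forall>v\<in>V. v > 0" using s1 unfolding V_def by force+
  let ?E = "EE s n"
  have Hsum: "Hf s c n x = (\<Sum>\<mu>\<in>M. CC s n c \<mu> * exp (?E \<mu> x))" for x
  proof -
    have "Hf s c n x = (\<Sum>\<mu>\<in>mm s n ` Sp. CC s n c \<mu> * exp (?E \<mu> x))"
      using fact2[of c s n x] finSp unfolding Sp_def by simp
    also have "\<dots> = (\<Sum>\<mu>\<in>M. CC s n c \<mu> * exp (?E \<mu> x))"
      by (rule sum.mono_neutral_right) (use finSp in \<open>auto simp: M_def\<close>)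
    finally show ?thesis .
  qed
  have pair: "filterlim (\<lambda>x. ?E \<mu> x - ?E \<nu> x) at_top (at_right 0) \<or>
              filterlim (\<lambda>x. ?E \<nu> x - ?E \<mu> x) at_top (at_right 0)"
    if mnM: "\<mu> \<in> M" "\<nu> \<in> M" "\<mu> \<noteq> \<nu>" for \<mu> \<nu>
  proof -
    define d where "d v = real (\<mu> v) - real (\<nu> v)" for v
    have ex: "\<exists>v\<in>V. d v \<noteq> 0"
    proof (rule ccontr)
      assume "\<not> ?thesis"
      hence "\<forall>v\<in>V. \<mu> v = \<nu> v" unfolding d_def by simp
      moreover have "\<forall>v. v \<notin> V \<longrightarrow> \<mu> v = 0 \<and> \<nu> v = 0"
      proof (intro allI impI conjI)
        fix v assume "v \<notin> V"
        obtain a1 a2 where "\<mu> = mm s n a1" "\<nu> = mm s n a2" using mnM(1,2) unfolding M_def by auto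
        thus "\<mu> v = 0" "\<nu> v = 0" using mm_out \<open>v \<notin> V\<close> unfolding V_def by auto
      qed
      ultimately have "\<mu> = \<nu>" by (metis ext)
      thus False using mnM(3) by simp
    qed
    have e: "?E \<mu> x - ?E \<nu> x = (\<Sum>v\<in>V. d v * x powr -v)" for x
      unfolding EE_def V_def d_def by (simp add: sum_subtractf[symmetric] algebra_simps)
    have e2: "?E \<nu> x - ?E \<mu> x = -(\<Sum>v\<in>V. d v * x powr -v)" for x
      using e[of x] by simp
    show ?thesis using lemD[OF finV Vpos ex] unfolding e e2 .
  qed
  define P where "P x = (\<forall>\<mu>\<in>M. \<forall>\<nu>\<in>M. filterlim (\<lambda>x. ?E \<mu> x - ?E \<nu> x) at_top (at_right 0) \<longrightarrow> ?E \<mu> x - ?E \<nu> x > 0)" for x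
  have evP: "eventually P (at_right 0)"
    unfolding P_def
  proof (intro eventually_ball_finite finM ballI)
    fix \<mu> \<nu> assume "\<mu> \<in> M" "\<nu> \<in> M"
    show "eventually (\<lambda>x. filterlim (\<lambda>x. ?E \<mu> x - ?E \<nu> x) at_top (at_right 0) \<longrightarrow> ?E \<mu> x - ?E \<nu> x > 0) (at_right (0::real))"
    proof (cases "filterlim (\<lambda>x. ?E \<mu> x - ?E \<nu> x) at_top (at_right (0::real))")
      case True
      hence "eventually (\<lambda>x. 0 < ?E \<mu> x - ?E \<nu> x) (at_right 0)"
        using True unfolding filterlim_at_top_dense by blast
      then show ?thesis by eventually_elim simp
    qed simp
  qed
  obtain x0 where x0: "P x0" using eventually_happens[OF evP] by auto
  obtain \<mu>0 where mu0: "\<mu>0 \<in> M" "\<forall>\<nu>\<in>M. ?E \<nu> x0 \<le> ?E \<mu>0 x0"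
  proof -
    let ?m = "Max ((\<lambda>\<mu>. ?E \<mu> x0) ` M)"
    have "?m \<in> (\<lambda>\<mu>. ?E \<mu> x0) ` M" using finM by simp
    then obtain \<mu>0 where "\<mu>0 \<in> M" "?E \<mu>0 x0 = ?m" by auto
    moreover have "\<forall>\<nu>\<in>M. ?E \<nu> x0 \<le> ?m" using finM by simp
    ultimately show ?thesis using that by auto
  qed
  have dom: "filterlim (\<lambda>x. ?E \<mu>0 x - ?E \<nu> x) at_top (at_right 0)" if "\<nu> \<in> M - {\<mu>0}" for \<nu>
  proof -
    have "\<not> filterlim (\<lambda>x. ?E \<nu> x - ?E \<mu>0 x) at_top (at_right 0)"
    proof
      assume "filterlim (\<lambda>x. ?E \<nu> x - ?E \<mu>0 x) at_top (at_right 0)"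
      hence "?E \<nu> x0 - ?E \<mu>0 x0 > 0" using x0 that mu0(1) unfolding P_def by blast
      moreover have "?E \<nu> x0 \<le> ?E \<mu>0 x0" using mu0(2) that by blast
      ultimately show False by linarith
    qed
    thus ?thesis using pair[of \<mu>0 \<nu>] that mu0(1) by blast
  qed
  define C0 where "C0 = CC s n c \<mu>0"
  have C0: "C0 \<noteq> 0" using mu0(1) unfolding C0_def M_def by simp
  have ratio_eq: "Hf s c n x * exp (- ?E \<mu>0 x) = C0 + (\<Sum>\<nu>\<in>M - {\<mu>0}. CC s n c \<nu> * exp (-(?E \<mu>0 x - ?E \<nu> x)))" for x
  proof -
    have "Hf s c n x * exp (- ?E \<mu>0 x) = (\<Sum>\<nu>\<in>M. CC s n c \<nu> * exp (?E \<nu> x) * exp (- ?E \<mu>0 x))"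
      by (simp add: Hsum sum_distrib_right)
    also have "\<dots> = (\<Sum>\<nu>\<in>M. CC s n c \<nu> * exp (-(?E \<mu>0 x - ?E \<nu> x)))"
      by (rule sum.cong[OF refl]) (simp add: mult.assoc exp_add[symmetric])
    also have "\<dots> = C0 + (\<Sum>\<nu>\<in>M - {\<mu>0}. CC s n c \<nu> * exp (-(?E \<mu>0 x - ?E \<nu> x)))"
      using finM mu0(1) by (simp add: sum.remove C0_def)
    finally show ?thesis .
  qed
  have lim: "((\<lambda>x. Hf s c n x * exp (- ?E \<mu>0 x)) \<longlongrightarrow> C0) (at_right 0)"
  proof -
    have "((\<lambda>x. C0 + (\<Sum>\<nu>\<in>M - {\<mu>0}. CC s n c \<nu> * exp (-(?E \<mu>0 x - ?E \<nu> x)))) \<longlongrightarrow> C0 + (\<Sum>\<nu>\<in>M - {\<mu>0}. CC s n c \<nu> * 0)) (at_right 0)"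
    proof (intro tendsto_add tendsto_const tendsto_sum tendsto_mult)
      fix \<nu> assume "\<nu> \<in> M - {\<mu>0}"
      hence "filterlim (\<lambda>x. ?E \<mu>0 x - ?E \<nu> x) at_top (at_right 0)" by (rule dom)
      hence "filterlim (\<lambda>x. -(?E \<mu>0 x - ?E \<nu> x)) at_bot (at_right 0)"
        unfolding filterlim_uminus_at_bot by simp
      thus "((\<lambda>x. exp (-(?E \<mu>0 x - ?E \<nu> x))) \<longlongrightarrow> 0) (at_right 0)"
        by (rule filterlim_compose[OF exp_at_bot])
    qed
    thus ?thesis by (simp add: ratio_eq)
  qed
  have "eventually (\<lambda>x. \<bar>C0\<bar> / 2 < \<bar>Hf s c n x * exp (- ?E \<mu>0 x)\<bar>) (at_right 0)"
    by (rule order_tendstoD(1)[OF tendsto_rabs[OF lim]]) (use C0 in simp)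
  moreover have "eventually (\<lambda>x::real. 0 < x \<and> x < 1) (at_right 0)"
    using eventually_at_right_real[of 0 1] by simp
  ultimately have ev: "eventually (\<lambda>x. \<bar>C0\<bar> / 2 * exp (1/x) \<le> \<bar>Hf s c n x\<bar>) (at_right 0)"
  proof eventually_elim
    case (elim x)
    have Ege: "1/x \<le> ?E \<mu>0 x"
    proof -
      obtain \<alpha>0 where a0: "\<alpha>0 \<in> Sp" "\<mu>0 = mm s n \<alpha>0" using mu0(1) unfolding M_def by auto
      have "\<alpha>0 \<noteq> (\<lambda>_. 0)" "\<forall>i\<ge>n. \<alpha>0 i = 0" using nc a0(1) unfolding nc_poly_def Sp_def by auto
      then obtain i where i: "i < n" "\<alpha>0 i \<noteq> 0" by (metis ext not_le)
      have "\<alpha>0 i \<le> \<mu>0 (s i)" unfolding a0(2) mm_def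
        by (rule member_le_sum) (use i in auto)
      hence m1: "1 \<le> real (\<mu>0 (s i))" using i by simp
      have "1/x = x powr (-1)" using elim by (simp add: powr_minus_divide)
      also have "\<dots> \<le> x powr (- s i)" using elim s1 i by (intro powr_mono') auto
      also have "\<dots> \<le> real (\<mu>0 (s i)) * x powr (- s i)" using m1 by (simp add: mult_le_cancel_right1)
      also have "\<dots> \<le> ?E \<mu>0 x" unfolding EE_def
        by (rule member_le_sum) (use i in auto)
      finally show ?thesis .
    qed
    have "\<bar>C0\<bar> / 2 * exp (1/x) \<le> \<bar>C0\<bar> / 2 * exp (?E \<mu>0 x)"
      using Ege by (intro mult_left_mono) auto
    also have "\<dots> \<le> \<bar>Hf s c n x * exp (- ?E \<mu>0 x)\<bar> * exp (?E \<mu>0 x)"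
      using elim(1) by simp
    also have "\<dots> = \<bar>Hf s c n x\<bar>"
      by (simp add: abs_mult mult.assoc exp_minus field_simps)
    finally show ?case .
  qed
  then obtain b where b: "b > 0" "\<forall>y>0. y < b \<longrightarrow> \<bar>C0\<bar> / 2 * exp (1/y) \<le> \<bar>Hf s c n y\<bar>"
    using ev unfolding eventually_at_right[of 0 1, OF zero_less_one] by blast
  have "\<bar>C0\<bar>/2 > 0" using C0 by simp
  thus ?thesis using b by blast
qed




definition Gr :: "real set \<Rightarrow> (real \<Rightarrow> real set) \<Rightarrow> real \<Rightarrow> real \<Rightarrow> real \<Rightarrow> real" where
  "Gr A N r = (\<lambda>a x. if a \<in> A \<and> 0 < x \<and> x \<le> 1 \<and> x \<notin> N a then exp (x powr (- r)) else 0)"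

lemma poly_eval_zero: assumes "nc_poly n c" shows "poly_eval c n (\<lambda>i. 0) = 0"
  unfolding poly_eval_def
proof (rule sum.neutral, intro ballI)
  fix \<alpha> assume "\<alpha> \<in> {\<alpha>. c \<alpha> \<noteq> 0}"
  hence "\<alpha> \<noteq> (\<lambda>_. 0)" "\<forall>i\<ge>n. \<alpha> i = 0" using assms unfolding nc_poly_def by auto
  then obtain i where i: "i < n" "\<alpha> i \<noteq> 0" by (metis ext not_le)
  hence "(\<Prod>i<n. (0::real) ^ \<alpha> i) = 0" by (intro prod_zero) auto
  thus "c \<alpha> * (\<Prod>i<n. 0 ^ \<alpha> i) = 0" by simp
qed

lemma poly_eval_cong: "(\<And>i. i < n \<Longrightarrow> v i = w i) \<Longrightarrow> poly_eval c n v = poly_eval c n w"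
  unfolding poly_eval_def by (intro sum.cong refl prod.cong) auto

lemma poly_net_Gr:
  assumes nc: "nc_poly n c" and G: "\<And>i. i < n \<Longrightarrow> G i = Gr A N (s i)"
  shows "poly_net c n G = (\<lambda>a x. if a \<in> A \<and> 0 < x \<and> x \<le> 1 \<and> x \<notin> N a then Hf s c n x else 0)"
proof (intro ext)
  fix a x
  show "poly_net c n G a x = (if a \<in> A \<and> 0 < x \<and> x \<le> 1 \<and> x \<notin> N a then Hf s c n x else 0)"
  proof (cases "a \<in> A \<and> 0 < x \<and> x \<le> 1 \<and> x \<notin> N a")
    case True
    then show ?thesis unfolding poly_net_def Hf_def
      by (simp add: G Gr_def cong: poly_eval_cong)
  next
    case False
    hence "poly_net c n G a x = poly_eval c n (\<lambda>i. 0)" unfolding poly_net_def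
      by (intro poly_eval_cong) (auto simp: G Gr_def)
    moreover have "(if a \<in> A \<and> 0 < x \<and> x \<le> 1 \<and> x \<notin> N a then Hf s c n x else 0) = 0"
      using False by (rule if_not_P)
    ultimately show ?thesis using poly_eval_zero[OF nc] by simp
  qed
qed

lemma Hf_meas0: "Hf s c n \<in> borel_measurable borel"
  unfolding Hf_def poly_eval_def by measurable

lemma Hf_meas: "Hf s c n \<in> borel_measurable lam01"
proof -
  have "Hf s c n \<in> borel_measurable lborel" using Hf_meas0 by simp
  hence "Hf s c n \<in> borel_measurable lebesgue" by (rule measurable_completion)
  thus ?thesis by (rule measurable_restrict_space1)
qed

lemma F_meas:
  assumes "N \<in> null_sets lebesgue"
  shows "(\<lambda>x. if 0 < x \<and> x \<le> 1 \<and> x \<notin> N then Hf s c n x else 0) \<in> borel_measurable lam01"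
proof -
  have "{0<..1} - N \<in> sets lebesgue" using assms by auto
  hence T: "{0<..1} - N \<in> sets lam01" by (auto simp: sets_restrict_space_iff)
  have "(\<lambda>x. indicator ({0<..1} - N) x * Hf s c n x) \<in> borel_measurable lam01"
    using T Hf_meas by measurable
  moreover have "(\<lambda>x. indicator ({0<..1} - N) x * Hf s c n x) = (\<lambda>x. if 0 < x \<and> x \<le> 1 \<and> x \<notin> N then Hf s c n x else 0)"
    by (auto simp: indicator_def)
  ultimately show ?thesis by simp
qed




lemma lam01_meas:
  assumes "X \<subseteq> {0..1}" "X \<in> sets lebesgue"
  shows "X \<in> sets lam01" "measure lam01 X = measure lebesgue X"
  using assms by (auto simp: sets_restrict_space_iff measure_restrict_space)

lemma meas_diff:
  assumes N: "N \<in> null_sets lebesgue" and d: "0 < \<delta>" "\<delta> \<le> 1"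
  shows "measure lam01 ({0<..<\<delta>} - N) = \<delta>" "{0<..<\<delta>} - N \<in> sets lam01"
proof -
  have sub: "{0<..<\<delta>} - N \<subseteq> {0..1}" using d by auto
  have ms: "{0<..<\<delta>} - N \<in> sets lebesgue" using N by auto
  have "measure lebesgue ({0<..<\<delta>} - N) = measure lebesgue {0<..<\<delta>}"
    by (rule measure_Diff_null_set[OF _ N]) simp
  also have "\<dots> = \<delta>" using d by simp
  finally show "measure lam01 ({0<..<\<delta>} - N) = \<delta>" using lam01_meas(2)[OF sub ms] by simp
  show "{0<..<\<delta>} - N \<in> sets lam01" using lam01_meas(1)[OF sub ms] .
qed

lemma exists_point:
  assumes N: "N \<in> null_sets lebesgue" and d: "0 < (\<delta>::real)" "\<delta> \<le> 1"
  shows "\<exists>x. 0 < x \<and> x < \<delta> \<and> x \<notin> N"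
proof (rule ccontr)
  assume "\<not> ?thesis"
  hence "{0<..<\<delta>} - N = {}" by auto
  hence "measure lam01 ({0<..<\<delta>} - N) = 0" by (simp only: measure_empty)
  thus False using meas_diff(1)[OF assms] d by simp
qed

lemma exp_bound: assumes "(t::real) > 0" shows "1 / (16 * t^2) \<le> exp (1 / (2*t))"
proof -
  have "1 / (4*t) \<le> exp (1/(4*t))" using exp_ge_add_one_self[of "1/(4*t)"] by linarith
  hence "(1/(4*t))^2 \<le> exp (1/(4*t))^2" using assms by (intro power_mono) auto
  also have "exp (1/(4*t))^2 = exp (1/(2*t))"
    by (simp add: exp_double[symmetric] field_simps)
  finally show ?thesis by (simp add: power2_eq_square field_simps)
qed

lemma not_dominated:
  assumes d: "\<delta> > 0" and K: "K > 0" and N: "N \<in> null_sets lebesgue"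
    and g: "integrable lam01 g" and dom: "AE x in lam01. \<bar>F x\<bar> \<le> g x"
    and gr: "\<And>x. 0 < x \<Longrightarrow> x < \<delta> \<Longrightarrow> x \<le> 1 \<Longrightarrow> x \<notin> N \<Longrightarrow> K * exp (1/x) \<le> \<bar>F x\<bar>"
  shows False
proof -
  define I where "I = integral\<^sup>L lam01 g"
  define t where "t = min (\<delta>/4) (min (1/4) (K / (16 * (\<bar>I\<bar> + 1))))"
  have t1: "t \<le> \<delta>/4" "t \<le> 1/4" "t \<le> K / (16 * (\<bar>I\<bar> + 1))" unfolding t_def by (rule min.cobounded1, meson min.cobounded1 min.coboundedI2, meson min.cobounded2 min.coboundedI2)
  have "K / (16 * (\<bar>I\<bar> + 1)) > 0" using K by (simp add: add_pos_nonneg)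
  hence t0: "t > 0" unfolding t_def using d by simp
  have t: "t > 0" "2*t < \<delta>" "2*t \<le> 1" "t \<le> K / (16 * (\<bar>I\<bar> + 1))"
    using t0 t1 d by auto
  define L where "L = K / (16 * t^2)"
  have AEN: "AE x in lam01. x \<notin> N"
  proof -
    have "N \<inter> {0..1} \<in> null_sets lam01"
      using N by (auto simp: null_sets_restrict_space intro: null_set_Int2)
    from AE_not_in[OF this] show ?thesis by (rule AE_mp) auto
  qed
  have AEb: "AE x in lam01. L * indicator {t..2*t} x \<le> g x"
    using AE_conjI[OF dom AEN]
  proof (rule AE_mp)
    show "AE x in lam01. \<bar>F x\<bar> \<le> g x \<and> x \<notin> N \<longrightarrow> L * indicator {t..2*t} x \<le> g x"
    proof (rule AE_I2, rule impI)
    fix x assume x01: "x \<in> space lam01" and h: "\<bar>F x\<bar> \<le> g x \<and> x \<notin> N"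
    show "L * indicator {t..2*t} x \<le> g x"
    proof (cases "x \<in> {t..2*t}")
      case True
      hence x: "0 < x" "x < \<delta>" "x \<le> 1" "t \<le> x" "x \<le> 2*t" using t by auto
      have "1/(2*t) \<le> 1/x" using x t by (simp add: frac_le)
      hence "exp (1/(2*t)) \<le> exp (1/x)" by simp
      hence "1 / (16 * t^2) \<le> exp (1/x)" using exp_bound[OF t(1)] by linarith
      hence "K * (1 / (16 * t^2)) \<le> K * exp (1/x)" using K by (intro mult_left_mono) auto
      also have "\<dots> \<le> \<bar>F x\<bar>" using gr x h by auto
      also have "\<dots> \<le> g x" using h by simp
      finally show ?thesis using True unfolding L_def by simp
    next
      case False
      have "0 \<le> g x" using h by linarith
      then show ?thesis using False by simp
    qed
    qed
  qed
  have Isub: "{t..2*t} \<subseteq> {0..1}" using t by auto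
  have Ims: "{t..2*t} \<in> sets lam01" "measure lam01 {t..2*t} = t"
    using lam01_meas[OF Isub] t by auto
  have intI: "integrable lam01 (\<lambda>x. L * indicator {t..2*t} x)"
  proof -
    have "emeasure lam01 {t..2*t} < \<infinity>"
      using Isub t(1) by (simp add: emeasure_restrict_space emeasure_lborel_Icc_eq)
    hence "integrable lam01 (indicat_real {t..2*t})"
      using Ims(1) by (simp add: integrable_real_indicator)
    thus ?thesis by simp
  qed
  have "L * t \<le> I"
  proof -
    have "integral\<^sup>L lam01 (\<lambda>x. L * indicator {t..2*t} x) \<le> I"
      unfolding I_def by (rule integral_mono_AE[OF intI g AEb])
    moreover have "integral\<^sup>L lam01 (\<lambda>x. L * indicator {t..2*t} x) = L * t"
    proof -
      have e: "{t..2*t} \<inter> space lam01 = {t..2*t}" using Isub by auto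
      have "integral\<^sup>L lam01 (\<lambda>x. L * indicator {t..2*t} x) = L * measure lam01 ({t..2*t} \<inter> space lam01)"
        by (simp del: space_lebesgue_on)
      thus ?thesis unfolding e Ims(2) .
    qed
    ultimately show ?thesis by linarith
  qed
  moreover have "L * t = K / (16 * t)" unfolding L_def using t by (simp add: power2_eq_square field_simps)
  moreover have "K / (16 * t) \<ge> \<bar>I\<bar> + 1"
  proof -
    have "16 * t * (\<bar>I\<bar> + 1) \<le> K" using t(4) by (simp add: field_simps)
    thus ?thesis using t(1) by (simp add: field_simps)
  qed
  ultimately show False by linarith
qed




lemma CC_nz_from_val:
  assumes nc: "nc_poly n c" and h: "Hf s c n x \<noteq> 0"
  shows "\<exists>\<mu>\<in>mm s n ` {\<alpha>. c \<alpha> \<noteq> 0}. CC s n c \<mu> \<noteq> 0"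
proof (rule ccontr)
  assume "\<not> ?thesis"
  hence "(\<Sum>\<mu>\<in>mm s n ` {\<alpha>. c \<alpha> \<noteq> 0}. CC s n c \<mu> * exp (EE s n \<mu> x)) = 0"
    by (intro sum.neutral) auto
  thus False using h fact2[of c s n x] nc unfolding nc_poly_def by simp
qed

lemma CC_nz_inj:
  assumes nc: "nc_poly n c" and inj: "inj_on s {..<n}" and c: "c \<noteq> (\<lambda>_. 0)"
  shows "\<exists>\<mu>\<in>mm s n ` {\<alpha>. c \<alpha> \<noteq> 0}. CC s n c \<mu> \<noteq> 0"
proof -
  obtain \<alpha>0 where a0: "c \<alpha>0 \<noteq> 0" using c by auto
  have mm_i: "mm s n \<beta> (s i) = \<beta> i" if "i < n" for \<beta> i
  proof -
    have "{j. j < n \<and> s j = s i} = {i}" using inj that by (auto dest: inj_onD)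
    thus ?thesis unfolding mm_def by simp
  qed
  have "{\<alpha>. c \<alpha> \<noteq> 0 \<and> mm s n \<alpha> = mm s n \<alpha>0} = {\<alpha>0}"
  proof (intro equalityI subsetI)
    fix \<alpha> assume "\<alpha> \<in> {\<alpha>. c \<alpha> \<noteq> 0 \<and> mm s n \<alpha> = mm s n \<alpha>0}"
    hence h: "c \<alpha> \<noteq> 0" "mm s n \<alpha> = mm s n \<alpha>0" by auto
    have "\<alpha> i = \<alpha>0 i" for i
    proof (cases "i < n")
      case True
      then show ?thesis using h(2) mm_i[of i \<alpha>] mm_i[of i \<alpha>0] by simp
    next
      case False
      hence "n \<le> i" by simp
      then show ?thesis using nc h(1) a0 unfolding nc_poly_def by metis
    qed
    thus "\<alpha> \<in> {\<alpha>0}" by auto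
  qed (use a0 in auto)
  hence "CC s n c (mm s n \<alpha>0) = c \<alpha>0" unfolding CC_def by simp
  thus ?thesis using a0 by auto
qed

lemma main_alg:
  fixes A :: "real set" and N :: "real \<Rightarrow> real set" and le :: "real \<Rightarrow> real \<Rightarrow> bool"
  assumes dir: "directed_set A le" and nul: "\<forall>a\<in>A. N a \<in> null_sets lebesgue"
    and conv: "\<forall>x\<in>{0..1}. \<exists>a0\<in>A. \<forall>a\<in>A. le a0 a \<longrightarrow> x \<in> N a"
  shows "strongly_algebrable (net_alg A) (ANM A le - ND A le) (UNIV :: real set)"
proof -
  obtain a1 where a1: "a1 \<in> A" using dir unfolding directed_set_def by auto
  have refl: "\<And>a. a \<in> A \<Longrightarrow> le a a" using dir unfolding directed_set_def by auto
  define X where "X = Gr A N ` {1..}"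
  have Xsub: "X \<subseteq> net_alg A" unfolding X_def net_alg_def Gr_def by auto
  have injG: "inj_on (Gr A N) {1..}"
  proof (rule inj_onI)
    fix r r' assume rr: "r \<in> {1..}" "r' \<in> {1..}" "Gr A N r = Gr A N r'"
    obtain x where x: "0 < x" "x < 1/2" "x \<notin> N a1" using exists_point[of "N a1" "1/2"] nul a1 by auto
    have "Gr A N r a1 x = Gr A N r' a1 x" using rr(3) by simp
    hence "exp (x powr (- r)) = exp (x powr (- r'))" using x a1 unfolding Gr_def by simp
    hence "x powr (- r) = x powr (- r')" by simp
    hence "- r = - r'" using x by (simp add: powr_inj)
    thus "r = r'" by simp
  qed
  have XU: "X \<approx> (UNIV :: real set)"
  proof -
    have "{1::real..} \<approx> X" unfolding X_def eqpoll_def using injG inj_on_imp_bij_betw by blast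
    moreover have "{1::real..} \<approx> (UNIV :: real set)"
    proof (rule lepoll_antisym)
      show "{1::real..} \<lesssim> (UNIV :: real set)" by (rule subset_imp_lepoll) simp
      show "(UNIV :: real set) \<lesssim> {1::real..}" unfolding lepoll_def
        by (rule exI[of _ "\<lambda>x. exp x + 1"]) (auto simp: inj_on_def)
    qed
    ultimately show ?thesis by (meson eqpoll_sym eqpoll_trans)
  qed
  have getS: "\<exists>s. (\<forall>i<n. 1 \<le> s i \<and> G i = Gr A N (s i))" if "G ` {..<n} \<subseteq> X" for n G
  proof -
    have "\<forall>i\<in>{..<n}. \<exists>r. 1 \<le> r \<and> G i = Gr A N r" using that unfolding X_def by force
    then obtain s where "\<forall>i\<in>{..<n}. 1 \<le> s i \<and> G i = Gr A N (s i)" by metis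
    thus ?thesis by auto
  qed
  have cond1: "poly_net c n G \<noteq> (\<lambda>a x. 0)"
    if h: "inj_on G {..<n}" "G ` {..<n} \<subseteq> X" "nc_poly n c" "c \<noteq> (\<lambda>_. 0)" for n G c
  proof -
    obtain s where s: "\<forall>i<n. 1 \<le> s i \<and> G i = Gr A N (s i)" using getS[OF h(2)] by blast
    have injs: "inj_on s {..<n}"
      using h(1) s unfolding inj_on_def by (metis lessThan_iff)
    have s1: "\<forall>i<n. 1 \<le> s i" using s by blast
    obtain \<delta> K where dK: "\<delta> > 0" "K > 0" "\<forall>x. 0 < x \<and> x < \<delta> \<longrightarrow> K * exp (1/x) \<le> \<bar>Hf s c n x\<bar>"
      using growth[OF h(3) s1 CC_nz_inj[OF h(3) injs h(4)]] by blast
    obtain x where x: "0 < x" "x < min \<delta> 1" "x \<notin> N a1"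
      using exists_point[of "N a1" "min \<delta> 1"] nul a1 dK(1) by auto
    have pn: "poly_net c n G = (\<lambda>a x. if a \<in> A \<and> 0 < x \<and> x \<le> 1 \<and> x \<notin> N a then Hf s c n x else 0)"
      by (rule poly_net_Gr[OF h(3)]) (use s in auto)
    have "0 < K * exp (1/x)" using dK(2) by simp
    also have "\<dots> \<le> \<bar>Hf s c n x\<bar>" using dK(3) x by auto
    finally have "poly_net c n G a1 x \<noteq> 0" unfolding pn using x a1 by auto
    thus ?thesis by metis
  qed
  have cond2: "poly_net c n G \<in> ANM A le - ND A le"
    if h: "G ` {..<n} \<subseteq> X" "nc_poly n c" "poly_net c n G \<noteq> (\<lambda>a x. 0)" for n G c
  proof -
    obtain s where s: "\<forall>i<n. 1 \<le> s i \<and> G i = Gr A N (s i)" using getS[OF h(1)] by blast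
    define F where "F = poly_net c n G"
    have pn: "F = (\<lambda>a x. if a \<in> A \<and> 0 < x \<and> x \<le> 1 \<and> x \<notin> N a then Hf s c n x else 0)"
      unfolding F_def by (rule poly_net_Gr[OF h(2)]) (use s in auto)
    obtain a x where "F a x \<noteq> 0" using h(3) unfolding F_def by metis
    hence "Hf s c n x \<noteq> 0" unfolding pn by (auto split: if_splits)
    hence nzc: "\<exists>\<mu>\<in>mm s n ` {\<alpha>. c \<alpha> \<noteq> 0}. CC s n c \<mu> \<noteq> 0" by (rule CC_nz_from_val[OF h(2)])
    have s1: "\<forall>i<n. 1 \<le> s i" using s by blast
    obtain \<delta> K where dK: "\<delta> > 0" "K > 0" "\<forall>x. 0 < x \<and> x < \<delta> \<longrightarrow> K * exp (1/x) \<le> \<bar>Hf s c n x\<bar>"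
      using growth[OF h(2) s1 nzc] by blast
    have Fa: "F a = (\<lambda>x. if 0 < x \<and> x \<le> 1 \<and> x \<notin> N a then Hf s c n x else 0)" if "a \<in> A" for a
      unfolding pn using that by auto
    have meas: "\<forall>a\<in>A. F a \<in> borel_measurable lam01"
    proof
      fix a assume a: "a \<in> A"
      show "F a \<in> borel_measurable lam01" unfolding Fa[OF a] using nul a by (intro F_meas) blast
    qed
    have ae: "ae_net_tendsto A le F (\<lambda>x. 0)"
      unfolding ae_net_tendsto_def
    proof (rule AE_I2)
      fix x assume "x \<in> space lam01"
      hence x: "x \<in> {0..1}" by simp
      then obtain a0 where a0: "a0 \<in> A" "\<forall>a\<in>A. le a0 a \<longrightarrow> x \<in> N a" using conv by blast
      show "net_tendsto A le (\<lambda>a. F a x) 0"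
        unfolding net_tendsto_def
      proof (intro allI impI)
        fix U :: "real set" assume U: "open U \<and> 0 \<in> U"
        show "\<exists>a0\<in>A. \<forall>a\<in>A. le a0 a \<longrightarrow> F a x \<in> U"
          using a0 U unfolding pn by (intro bexI[of _ a0]) auto
      qed
    qed
    have notm: "\<not> net_tendsto_in_measure A le F (\<lambda>x. 0)"
    proof
      assume "net_tendsto_in_measure A le F (\<lambda>x. 0)"
      hence t: "net_tendsto A le (\<lambda>a. measure lam01 {x\<in>{0..1}. K \<le> \<bar>F a x - 0\<bar>}) 0"
        unfolding net_tendsto_in_measure_def using dK(2) by blast
      define d where "d = min \<delta> 1"
      have d: "0 < d" "d \<le> 1" using dK(1) unfolding d_def by auto
      obtain a0 where a0: "a0 \<in> A" "\<forall>a\<in>A. le a0 a \<longrightarrow> measure lam01 {x\<in>{0..1}. K \<le> \<bar>F a x - 0\<bar>} \<in> {..<d}"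
      proof -
        have "open {..<d} \<and> (0::real) \<in> {..<d}" using d by auto
        from t[unfolded net_tendsto_def, rule_format, OF this] show ?thesis using that by blast
      qed
      hence lt: "measure lam01 {x\<in>{0..1}. K \<le> \<bar>F a0 x - 0\<bar>} < d" using refl by auto
      have fm: "finite_measure lam01" by (rule finite_measure_lebesgue_on) simp
      have ma: "F a0 \<in> borel_measurable lam01" using meas a0(1) by blast
      have Bs: "{x\<in>space lam01. K \<le> \<bar>F a0 x - 0\<bar>} \<in> sets lam01"
      proof -
        have "(\<lambda>x. \<bar>F a0 x - 0\<bar>) \<in> borel_measurable lam01" using ma by simp
        thus ?thesis unfolding borel_measurable_iff_ge by blast
      qed
      have sub: "{0<..<d} - N a0 \<subseteq> {x\<in>{0..1}. K \<le> \<bar>F a0 x - 0\<bar>}"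
      proof
        fix x assume x: "x \<in> {0<..<d} - N a0"
        hence x': "0 < x" "x < \<delta>" "x \<le> 1" "x \<notin> N a0" using d unfolding d_def by auto
        have "K \<le> K * exp (1/x)" using dK(2) x' by simp
        also have "\<dots> \<le> \<bar>Hf s c n x\<bar>" using dK(3) x' by auto
        finally show "x \<in> {x\<in>{0..1}. K \<le> \<bar>F a0 x - 0\<bar>}" using x' a0(1) unfolding pn by auto
      qed
      have "d = measure lam01 ({0<..<d} - N a0)" using meas_diff(1)[of "N a0" d] nul a0(1) d by auto
      also have "\<dots> \<le> measure lam01 {x\<in>{0..1}. K \<le> \<bar>F a0 x - 0\<bar>}"
        using finite_measure.finite_measure_mono[OF fm sub] Bs by simp
      finally show False using lt by simp
    qed
    have anm: "F \<in> ANM A le"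
      unfolding ANM_def using meas ae notm by auto
    have nnd: "F \<notin> ND A le"
    proof
      assume "F \<in> ND A le"
      then obtain g where g: "integrable lam01 g" "\<forall>a\<in>A. AE x in lam01. \<bar>F a x\<bar> \<le> g x"
        unfolding ND_def by blast
      show False
      proof (rule not_dominated[OF dK(1,2) _ g(1)])
        show "N a1 \<in> null_sets lebesgue" using nul a1 by blast
        show "AE x in lam01. \<bar>F a1 x\<bar> \<le> g x" using g(2) a1 by blast
        fix x assume "0 < x" "x < \<delta>" "x \<le> 1" "x \<notin> N a1"
        thus "K * exp (1/x) \<le> \<bar>F a1 x\<bar>" using dK(3) a1 unfolding pn by auto
      qed
    qed
    show ?thesis using anm nnd unfolding F_def by blast
  qed
  show ?thesis unfolding strongly_algebrable_def
  proof (intro exI[of _ X] conjI Xsub XU allI impI)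
    fix n G c assume "inj_on G {..<n} \<and> G ` {..<n} \<subseteq> X \<and> nc_poly n c \<and> c \<noteq> (\<lambda>_. 0)"
    thus "poly_net c n G \<noteq> (\<lambda>a x. 0)" using cond1 by blast
  next
    fix n G c assume "G ` {..<n} \<subseteq> X \<and> nc_poly n c \<and> poly_net c n G \<noteq> (\<lambda>a x. 0)"
    thus "poly_net c n G \<in> ANM A le - ND A le" using cond2 by blast
  qed
qed


theorem mainTheorem3:
  shows "\<exists>(A :: real set) le. directed_set A le \<and> \<not> Card_order (dir_rel A le) \<and>
     card_eq_covN A \<and>
     strongly_algebrable (net_alg A) (ANM A le - ND A le) (UNIV :: real set)"
proof -
  obtain A :: "real set" and N :: "real \<Rightarrow> real set" and le :: "real \<Rightarrow> real \<Rightarrow> bool" where h0: "directed_set A le \<and> \<not> Card_order (dir_rel A le) \<and> card_eq_covN A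
    \<and> (\<forall>a\<in>A. N a \<in> null_sets lebesgue) \<and> (\<forall>x\<in>{0..1}. \<exists>a0\<in>A. \<forall>a\<in>A. le a0 a \<longrightarrow> x \<in> N a)"
    using dir_part by (elim exE) (rule that)
  note h = conjunct1[OF h0] conjunct1[OF conjunct2[OF h0]] conjunct1[OF conjunct2[OF conjunct2[OF h0]]]
    conjunct1[OF conjunct2[OF conjunct2[OF conjunct2[OF h0]]]] conjunct2[OF conjunct2[OF conjunct2[OF conjunct2[OF h0]]]]
  have sa: "strongly_algebrable (net_alg A) (ANM A le - ND A le) (UNIV :: real set)"
    using h(1) h(4) h(5) by (rule main_alg)
  show ?thesis by (intro exI[of _ A] exI[of _ le] conjI h(1) h(2) h(3) sa)
qed

end
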